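(* Let $\mathcal{E}$ be a metric space, $\lambda,\kappa,\mu\colon\mathcal{E}\to[0,\infty)$ continuous, $t\ge0$, and let $\{J_n\}_{n\in\mathbb{N}}$ be $\mathcal{E}$-valued càdlàg processes such that the laws $\nu_n$ of $\phi_t(J_n)$ on $\mathbb{R}$ satisfy a large deviations principle with rate function $\psi$. Then the set $\mathcal{R}(t)$ of attainable parameters at time $t$ is a non-empty closed subset of $[0,\infty)$ and $\{\gamma:\psi(\gamma)<\infty\}\subset\mathcal{R}(t)$.
   Context: $\phi_t(f)=\int_0^t\lambda(f(s))\exp(-\kappa(f(s))\int_s^t\mu(f(r))\,dr)\,ds$ for càdlàg $f\colon[0,\infty)\to\mathcal{E}$. A sequence of probability measures $\nu_n$ satisfies an LDP with rate function $\psi$ if $\psi\colon\mathbb{R}\to[0,\infty]$ is lower semicontinuous, $\limsup\frac1n\log\nu_n(F)\le-\inf_F\psi$ for closed $F$ and $\liminf\frac1n\log\nu_n(G)\ge-\inf_G\psi$ for open $G$. A number $\gamma\in[0,\infty)$ is an attainable parameter at time $t$ if for every $\epsilon>0$ there exists $N_\epsilon$ such that $\nu_n((\gamma-\epsilon,\gamma+\epsilon))>0$ for all $n\ge N_\epsilon$; $\mathcal{R}(t)$ denotes the set of such $\gamma$. *)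

theory Defs
  imports "HOL-Probability.Probability"
begin

text \<open>A path f : [0,\<infinity>) \<rightarrow> E (represented as a function on real; only values
  on [0,\<infinity>) matter) is cadlag: right-continuous at every s \<ge> 0 and with a
  left limit at every s > 0.\<close>
definition cadlag :: "(real \<Rightarrow> 'e::metric_space) \<Rightarrow> bool" where
  "cadlag f \<longleftrightarrow> (\<forall>s\<ge>0. continuous (at_right s) f \<and> (s > 0 \<longrightarrow> (\<exists>l. (f \<longlongrightarrow> l) (at_left s))))"

definition phi :: "('e \<Rightarrow> real) \<Rightarrow> ('e \<Rightarrow> real) \<Rightarrow> ('e \<Rightarrow> real) \<Rightarrow> real \<Rightarrow> (real \<Rightarrow> 'e) \<Rightarrow> real" where
  "phi lam kap mu t f =
     integral {0..t} (\<lambda>s. lam (f s) * exp (- kap (f s) * integral {s..t} (\<lambda>r. mu (f r))))"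

definition scaled_log :: "nat \<Rightarrow> real \<Rightarrow> ereal" where
  "scaled_log n p = (if p = 0 then - \<infinity> else ereal (ln p / real n))"

definition LDP :: "(nat \<Rightarrow> real measure) \<Rightarrow> (real \<Rightarrow> ereal) \<Rightarrow> bool" where
  "LDP nu psi \<longleftrightarrow>
     (\<forall>x. psi x \<ge> 0) \<and>
     (\<forall>c. closed {x. psi x \<le> c}) \<and>
     (\<forall>F. closed F \<longrightarrow> limsup (\<lambda>n. scaled_log n (measure (nu n) F)) \<le> - (INF x\<in>F. psi x)) \<and>
     (\<forall>G. open G \<longrightarrow> liminf (\<lambda>n. scaled_log n (measure (nu n) G)) \<ge> - (INF x\<in>G. psi x))"

definition attainable :: "(nat \<Rightarrow> real measure) \<Rightarrow> real set" where
  "attainable nu = {\<gamma>. \<gamma> \<ge> 0 \<and>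
     (\<forall>\<epsilon>>0. \<exists>N. \<forall>n\<ge>N. measure (nu n) {\<gamma> - \<epsilon> <..< \<gamma> + \<epsilon>} > 0)}"

end

theory Submission
  imports Defs
begin

lemma phi_nonneg:
  assumes "\<And>x. lam x \<ge> 0"
  shows "phi lam kap mu t f \<ge> 0"
proof (cases "(\<lambda>s. lam (f s) * exp (- kap (f s) * integral {s..t} (\<lambda>r. mu (f r)))) integrable_on {0..t}")
  case True
  then show ?thesis unfolding phi_def
    by (intro integral_nonneg) (auto intro: mult_nonneg_nonneg assms)
next
  case False
  then show ?thesis unfolding phi_def by (simp add: not_integrable_integral)
qed

theorem lemma1:
  fixes lam kap mu :: "'e::metric_space \<Rightarrow> real"
    and t :: real
    and M :: "nat \<Rightarrow> 'w measure"
    and J :: "nat \<Rightarrow> 'w \<Rightarrow> real \<Rightarrow> 'e"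
    and psi :: "real \<Rightarrow> ereal"
  assumes "continuous_on UNIV lam" "continuous_on UNIV kap" "continuous_on UNIV mu"
    and "\<And>x. lam x \<ge> 0" "\<And>x. kap x \<ge> 0" "\<And>x. mu x \<ge> 0"
    and "t \<ge> 0"
    and "\<And>n. prob_space (M n)"
    and "\<And>n \<omega>. \<omega> \<in> space (M n) \<Longrightarrow> cadlag (J n \<omega>)"
    and "\<And>n. (\<lambda>\<omega>. phi lam kap mu t (J n \<omega>)) \<in> borel_measurable (M n)"
    and "LDP (\<lambda>n. distr (M n) borel (\<lambda>\<omega>. phi lam kap mu t (J n \<omega>))) psi"
  shows "attainable (\<lambda>n. distr (M n) borel (\<lambda>\<omega>. phi lam kap mu t (J n \<omega>))) \<noteq> {}
    \<and> closed (attainable (\<lambda>n. distr (M n) borel (\<lambda>\<omega>. phi lam kap mu t (J n \<omega>))))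
    \<and> attainable (\<lambda>n. distr (M n) borel (\<lambda>\<omega>. phi lam kap mu t (J n \<omega>))) \<subseteq> {0..}
    \<and> {\<gamma>. psi \<gamma> < \<infinity>} \<subseteq> attainable (\<lambda>n. distr (M n) borel (\<lambda>\<omega>. phi lam kap mu t (J n \<omega>)))"
proof -
  define nu where "nu = (\<lambda>n. distr (M n) borel (\<lambda>\<omega>. phi lam kap mu t (J n \<omega>)))"
  define A where "A = attainable nu"
  have ldp: "LDP nu psi" using assms(11) unfolding nu_def .
  note L = ldp[unfolded LDP_def]
  note L1 = conjunct1[OF L]
  note L3 = conjunct1[OF conjunct2[OF conjunct2[OF L]]]
  note L4 = conjunct2[OF conjunct2[OF conjunct2[OF L]]]
  have meas: "\<And>n S. S \<in> sets borel \<Longrightarrow> measure (nu n) S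
      = measure (M n) ((\<lambda>\<omega>. phi lam kap mu t (J n \<omega>)) -` S \<inter> space (M n))"
    unfolding nu_def by (rule measure_distr[OF assms(10)]) auto
  have unit: "measure (nu n) UNIV = 1" for n
  proof -
    interpret prob_space "M n" by (rule assms(8))
    have "measure (nu n) UNIV = measure (M n) (space (M n))"
      using meas[of UNIV n] by simp
    then show ?thesis by (simp add: prob_space)
  qed
  have fin: "\<gamma> \<in> A" if fin\<gamma>: "psi \<gamma> < \<infinity>" for \<gamma>
  proof -
    have key: "\<exists>N. \<forall>n\<ge>N. measure (nu n) {\<gamma> - e <..< \<gamma> + e} > 0" if e: "e > 0" for e
    proof -
      let ?G = "{\<gamma> - e <..< \<gamma> + e}"
      have "open ?G" by simp
      then have lo: "liminf (\<lambda>n. scaled_log n (measure (nu n) ?G)) \<ge> - (INF x\<in>?G. psi x)"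
        by (rule L4[rule_format])
      have "\<gamma> \<in> ?G" using e by simp
      hence "(INF x\<in>?G. psi x) \<le> psi \<gamma>" by (rule INF_lower)
      hence "- psi \<gamma> \<le> - (INF x\<in>?G. psi x)" by simp
      moreover have ps: "psi \<gamma> \<ge> 0" using L1 by blast
      obtain r where r: "psi \<gamma> = ereal r" using fin\<gamma> ps by (cases "psi \<gamma>") auto
      have lt: "ereal (- r - 1) < - psi \<gamma>" using r by simp
      ultimately have "ereal (- r - 1) < liminf (\<lambda>n. scaled_log n (measure (nu n) ?G))"
        using lo by (meson lt order.strict_trans2)
      hence "eventually (\<lambda>n. ereal (- r - 1) < scaled_log n (measure (nu n) ?G)) sequentially"
        by (rule less_LiminfD)
      then obtain N where N: "\<And>n. n \<ge> N \<Longrightarrow> ereal (- r - 1) < scaled_log n (measure (nu n) ?G)"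
        unfolding eventually_sequentially by blast
      have "measure (nu n) ?G > 0" if "n \<ge> N" for n
      proof -
        have "measure (nu n) ?G \<noteq> 0"
        proof
          assume "measure (nu n) ?G = 0"
          hence "scaled_log n (measure (nu n) ?G) = - \<infinity>" by (simp add: scaled_log_def)
          with N[OF that] show False by simp
        qed
        then show ?thesis by (simp add: zero_less_measure_iff)
      qed
      then show ?thesis by blast
    qed
    have g0: "\<gamma> \<ge> 0"
    proof (rule ccontr)
      assume "\<not> \<gamma> \<ge> 0"
      hence neg: "- \<gamma> > 0" by simp
      define S where "S = {\<gamma> - (-\<gamma>) <..< \<gamma> + (-\<gamma>)}"
      obtain N where N: "\<forall>n\<ge>N. measure (nu n) S > 0"
        using key[OF neg] unfolding S_def by blast
      have E: "(\<lambda>\<omega>. phi lam kap mu t (J N \<omega>)) -` S \<inter> space (M N) = {}"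
      proof (rule equals0I)
        fix w assume "w \<in> (\<lambda>\<omega>. phi lam kap mu t (J N \<omega>)) -` S \<inter> space (M N)"
        hence "phi lam kap mu t (J N w) \<in> S" by blast
        hence "phi lam kap mu t (J N w) < \<gamma> + (-\<gamma>)" unfolding S_def by (rule greaterThanLessThan_iff[THEN iffD1, THEN conjunct2])
        moreover have "phi lam kap mu t (J N w) \<ge> 0" by (rule phi_nonneg[OF assms(4)])
        ultimately show False by linarith
      qed
      have "S \<in> sets borel" unfolding S_def by simp
      from meas[OF this, of N] E have "measure (nu N) S = 0" by simp
      with N show False by auto
    qed
    show ?thesis unfolding A_def attainable_def
    proof (intro CollectI conjI allI impI)
      show "\<gamma> \<ge> 0" by (rule g0)
    next
      fix e :: real assume "e > 0"
      then show "\<exists>N. \<forall>n\<ge>N. measure (nu n) {\<gamma> - e <..< \<gamma> + e} > 0" by (rule key)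
    qed
  qed
  have ne: "A \<noteq> {}"
  proof -
    have "closed (UNIV::real set)" by simp
    then have "limsup (\<lambda>n. scaled_log n (measure (nu n) UNIV)) \<le> - (INF x\<in>UNIV. psi x)"
      by (rule L3[rule_format])
    moreover have "(\<lambda>n. scaled_log n (measure (nu n) UNIV)) = (\<lambda>n. 0)"
      by (rule ext) (simp add: unit scaled_log_def)
    ultimately have "0 \<le> - (INF x\<in>UNIV. psi x)" by (simp add: Limsup_const)
    hence "(INF x\<in>UNIV. psi x) \<noteq> \<infinity>" by auto
    have "\<exists>x. psi x < \<infinity>"
    proof (rule ccontr)
      assume "\<not> (\<exists>x. psi x < \<infinity>)"
      hence "\<And>x. psi x = \<infinity>" using less_PInf_Ex_of_nat by (metis ereal_less_PInfty)
      hence "(INF x\<in>UNIV. psi x) = \<infinity>" by simp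
      with \<open>(INF x\<in>UNIV. psi x) \<noteq> \<infinity>\<close> show False by simp
    qed
    then obtain x where "psi x < \<infinity>" by blast
    then have "x \<in> A" by (rule fin)
    then show ?thesis by auto
  qed
  have sub: "A \<subseteq> {0..}" unfolding A_def attainable_def by auto
  have cl: "closed A"
    unfolding closed_sequential_limits
  proof (intro allI impI, elim conjE)
    fix s l assume s: "\<forall>n. s n \<in> A" and l: "s \<longlonglongrightarrow> l"
    have "l \<ge> 0"
      using l s sub by (intro LIMSEQ_le_const[OF l]) auto
    moreover have key2: "\<exists>N. \<forall>n\<ge>N. measure (nu n) {l - e <..< l + e} > 0" if e: "e > 0" for e
    proof -
      have "\<exists>no. \<forall>n\<ge>no. norm (s n - l) < e/2" using e by (intro LIMSEQ_D[OF l]) simp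
      then obtain k where "norm (s k - l) < e/2" by auto
      hence k: "dist (s k) l < e/2" by (simp add: dist_norm)
      have "s k \<in> A" using s by blast
      hence "\<forall>\<epsilon>>0. \<exists>N. \<forall>n\<ge>N. measure (nu n) {s k - \<epsilon> <..< s k + \<epsilon>} > 0"
        unfolding A_def attainable_def by simp
      moreover have "e/2 > 0" using e by simp
      ultimately have "\<exists>N. \<forall>n\<ge>N. measure (nu n) {s k - e/2 <..< s k + e/2} > 0" by blast
      then obtain N where N: "\<And>n. n \<ge> N \<Longrightarrow> measure (nu n) {s k - e/2 <..< s k + e/2} > 0"
        by blast
      have "measure (nu n) {l - e <..< l + e} > 0" if "n \<ge> N" for n
      proof -
        interpret prob_space "nu n" unfolding nu_def
          by (intro prob_space.prob_space_distr assms(8) assms(10))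
        have "{s k - e/2 <..< s k + e/2} \<subseteq> {l - e <..< l + e}"
        proof
          fix x assume x: "x \<in> {s k - e/2 <..< s k + e/2}"
          have "\<bar>s k - l\<bar> < e/2" using k by (simp add: dist_real_def)
          hence a1: "s k - l < e/2" and a2: "l - s k < e/2" by linarith+
          from x have b1: "s k - e/2 < x" and b2: "x < s k + e/2" by auto
          from a1 a2 b1 b2 have "l - e < x" "x < l + e" by linarith+
          then show "x \<in> {l - e <..< l + e}" by simp
        qed
        hence "measure (nu n) {s k - e/2 <..< s k + e/2} \<le> measure (nu n) {l - e <..< l + e}"
          by (intro finite_measure_mono) (auto simp: nu_def)
        with N[OF that] show ?thesis by linarith
      qed
      then show ?thesis by blast
    qed
    ultimately show "l \<in> A" unfolding A_def attainable_def
    proof (intro CollectI conjI allI impI)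
      fix e :: real assume "e > 0"
      then show "\<exists>N. \<forall>n\<ge>N. measure (nu n) {l - e <..< l + e} > 0" by (rule key2)
    qed
  qed
  have fin': "{\<gamma>. psi \<gamma> < \<infinity>} \<subseteq> A" using fin by blast
  show ?thesis unfolding nu_def[symmetric] A_def[symmetric] using ne cl sub fin' by (intro conjI)
qed

end
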